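(* Let $r$ be a positive integer and let $x\in\{0,1\}^\omega$ be an $r$-power free Sturmian word. Then for every infinite sequence $V_0,V_1,V_2,\dots$ of words $V_i\in\{0,1\}^+$ there exist $k\ge1$, indices $0\le n_1<n_2<\cdots<n_k$ and a permutation $\sigma$ of $\{1,\dots,k\}$ such that $V_{n_{\sigma(1)}}V_{n_{\sigma(2)}}\cdots V_{n_{\sigma(k)}}\notin\mathrm{Fact}(x)$.
   Context: $\mathrm{Fact}(x)$ is the set of non-empty finite factors $x_ix_{i+1}\cdots x_{i+j}$ ($i,j\ge0$) of $x=x_0x_1\cdots$. A word $x\in\{0,1\}^\omega$ is Sturmian if it is aperiodic (no suffix of $x$ is of the form $u^\omega=uuu\cdots$ with $u$ non-empty) and balanced: for all factors $u,v$ of $x$ with $|u|=|v|$ and each letter $a\in\{0,1\}$, $\big||u|_a-|v|_a\big|\le1$, where $|u|_a$ is the number of occurrences of $a$ in $u$. A word $x$ is $r$-power free if $u^r\notin\mathrm{Fact}(x)$ for every $u\in\mathrm{Fact}(x)$, where $u^r$ denotes $u$ concatenated with itself $r$ times. *)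

theory Defs
  imports Main
begin

text \<open>Infinite words over the alphabet {0,1} are functions nat => nat with values in {0,1};
finite words are lists of nat.\<close>

definition binary_word :: "(nat \<Rightarrow> nat) \<Rightarrow> bool" where
  "binary_word x \<longleftrightarrow> (\<forall>i. x i \<in> {0,1})"

definition Fact :: "(nat \<Rightarrow> nat) \<Rightarrow> nat list set" where
  "Fact x = {map x [i..<i + j + 1] | i j. True}"

definition aperiodic :: "(nat \<Rightarrow> nat) \<Rightarrow> bool" where
  "aperiodic x \<longleftrightarrow>
     \<not> (\<exists>u m. u \<noteq> [] \<and> (\<forall>n. x (m + n) = u ! (n mod length u)))"

definition balanced :: "(nat \<Rightarrow> nat) \<Rightarrow> bool" where
  "balanced x \<longleftrightarrow>
     (\<forall>u \<in> Fact x. \<forall>v \<in> Fact x. length u = length v \<longrightarrow>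
        (\<forall>a \<in> {0::nat, 1}. \<bar>int (count_list u a) - int (count_list v a)\<bar> \<le> 1))"

definition sturmian :: "(nat \<Rightarrow> nat) \<Rightarrow> bool" where
  "sturmian x \<longleftrightarrow> binary_word x \<and> aperiodic x \<and> balanced x"

definition power_free :: "nat \<Rightarrow> (nat \<Rightarrow> nat) \<Rightarrow> bool" where
  "power_free r x \<longleftrightarrow> (\<forall>u \<in> Fact x. concat (replicate r u) \<notin> Fact x)"

end

theory Submission imports Defs "HOL-Library.Infinite_Set" begin

definition Sw :: "(nat \<Rightarrow> nat) \<Rightarrow> nat \<Rightarrow> nat \<Rightarrow> nat" where
  "Sw x i n = (\<Sum>j<n. x (i+j))"

lemma Sw_0[simp]: "Sw x i 0 = 0" by (simp add: Sw_def)

lemma Sw_add: "Sw x i (m+n) = Sw x i m + Sw x (i+m) n"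
  by (induct n) (simp_all add: Sw_def add.assoc)

lemma Sw_Suc: "Sw x i (Suc n) = Sw x i n + x (i+n)"
  by (simp add: Sw_def)

lemma Sw_Suc2: "Sw x i (Suc n) = x i + Sw x (Suc i) n"
  using Sw_add[of x i 1 n] by (simp add: Sw_def)

lemma Sw_cong: "(\<And>j. j<n \<Longrightarrow> x (a+j) = x (b+j)) \<Longrightarrow> Sw x a n = Sw x b n"
  by (simp add: Sw_def)

lemma count_Sw: "\<forall>i. x i \<in> {0,1} \<Longrightarrow> count_list (map x [i..<i+n]) 1 = Sw x i n"
proof (induct n)
  case 0 then show ?case by simp
next
  case (Suc n)
  have "x (i+n) \<in> {0,1}" using Suc.prems by blast
  then show ?case using Suc by (auto simp: Sw_Suc)
qed

lemma in_Fact: "n \<ge> 1 \<Longrightarrow> map x [i..<i+n] \<in> Fact x"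
  unfolding Fact_def by (rule CollectI, rule exI[of _ i], rule exI[of _ "n-1"]) simp

lemma Fact_E: "w \<in> Fact x \<Longrightarrow> \<exists>i. w = map x [i..<i+length w] \<and> w \<noteq> []"
  unfolding Fact_def by auto

lemma Fact_nth: "map x [i..<i+length w] = w \<Longrightarrow> j < length w \<Longrightarrow> x (i+j) = w ! j"
  by (metis add_diff_cancel_left' length_map length_upt nth_map_upt)

lemma bal_Sw:
  assumes "balanced x" "\<forall>i. x i \<in> {0,1}"
  shows "Sw x i n \<le> Sw x j n + 1"
proof (cases "n = 0")
  case True then show ?thesis by simp
next
  case False
  then have "map x [i..<i+n] \<in> Fact x" "map x [j..<j+n] \<in> Fact x" by (auto intro: in_Fact)
  with assms(1) have "\<bar>int (count_list (map x [i..<i+n]) 1) - int (count_list (map x [j..<j+n]) 1)\<bar> \<le> 1"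
    unfolding balanced_def by auto
  then show ?thesis using count_Sw[OF assms(2)] by simp
qed

definition Lw :: "(nat \<Rightarrow> nat) \<Rightarrow> nat \<Rightarrow> nat" where
  "Lw x n = (LEAST v. \<exists>i. Sw x i n = v)"

lemma Lw_le: "Lw x n \<le> Sw x i n"
  unfolding Lw_def by (rule Least_le) blast

lemma Lw_ex: "\<exists>i. Sw x i n = Lw x n"
  unfolding Lw_def by (rule LeastI_ex) blast

lemma Lw_ge:
  assumes "balanced x" "\<forall>i. x i \<in> {0,1}"
  shows "Sw x i n \<le> Lw x n + 1"
proof -
  obtain j where "Sw x j n = Lw x n" using Lw_ex by blast
  with bal_Sw[OF assms, of i n j] show ?thesis by simp
qed

lemma concat_rep_snoc: "concat (replicate m u) @ u = concat (replicate (Suc m) u)"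
  by (induct m) simp_all

lemma periodic_power:
  assumes per: "\<And>t. t < r*n \<Longrightarrow> x (i+t+n) = x (i+t)"
    and "m \<le> r"
  shows "map x [i..<i+m*n] = concat (replicate m (map x [i..<i+n]))"
  using assms(2)
proof (induct m)
  case 0 then show ?case by simp
next
  case (Suc m)
  have sh: "x (i + m*n + j) = x (i+j)" if "j < n" for j
    using Suc.prems that
  proof (induct m arbitrary: j)
    case 0 then show ?case by simp
  next
    case (Suc m)
    have "m*n + j < r*n"
    proof -
      have "m*n + j < m*n + n" using Suc.prems by simp
      also have "\<dots> = Suc m * n" by simp
      also have "\<dots> \<le> r*n" using Suc.prems by (intro mult_le_mono1) simp
      finally show ?thesis .
    qed
    then have "x (i + (m*n+j) + n) = x (i + (m*n + j))" using per by blast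
    moreover have "x (i + m*n + j) = x (i+j)" using Suc by simp
    ultimately show ?case by (simp add: algebra_simps)
  qed
  have "[i..<i+Suc m*n] = [i..<i+m*n] @ [i+m*n..<i+m*n+n]"
  proof -
    have "i + Suc m * n = (i+m*n)+n" by simp
    then show ?thesis using upt_add_eq_append[of i "i+m*n" n] by (metis le_add1)
  qed
  moreover have "map x [i+m*n..<i+m*n+n] = map x [i..<i+n]"
    by (rule nth_equalityI) (simp_all add: sh)
  ultimately show ?case using Suc
    by (simp add: concat_rep_snoc del: replicate_Suc)
qed

lemma no_const_run:
  assumes pf: "power_free r x" and r: "r > 0" and n: "n \<ge> 1"
    and c: "\<And>t. t \<le> r*n \<Longrightarrow> Sw x (i+t) n = Sw x i n"
  shows False
proof -
  have per: "x (i+t+n) = x (i+t)" if "t < r*n" for t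
  proof -
    have "Sw x (i+t) n = Sw x (i+Suc t) n" using c[of t] c[of "Suc t"] that by simp
    moreover have "Sw x (i+t) (Suc n) = Sw x (i+t) n + x (i+t+n)" by (simp add: Sw_Suc)
    moreover have "Sw x (i+t) (Suc n) = x (i+t) + Sw x (Suc (i+t)) n" by (rule Sw_Suc2)
    ultimately show ?thesis by simp
  qed
  have eq: "map x [i..<i+r*n] = concat (replicate r (map x [i..<i+n]))"
    using periodic_power[OF per] by simp
  have "map x [i..<i+n] \<in> Fact x" using n by (rule in_Fact)
  moreover have "map x [i..<i+r*n] \<in> Fact x" using n r by (intro in_Fact) simp
  ultimately show False using pf eq unfolding power_free_def by auto
qed

lemma both_values:
  assumes pf: "power_free r x" and r: "r > 0" and n: "n \<ge> 1"
    and bal: "balanced x" and bin: "\<forall>i. x i \<in> {0,1}"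
  shows "\<exists>t\<le>r*n. Sw x (i+t) n = Lw x n" "\<exists>t\<le>r*n. Sw x (i+t) n = Lw x n + 1"
proof -
  have rng: "Sw x j n = Lw x n \<or> Sw x j n = Lw x n + 1" for j
    using Lw_le[of x n j] Lw_ge[OF bal bin, of j n] by linarith
  show "\<exists>t\<le>r*n. Sw x (i+t) n = Lw x n"
  proof (rule ccontr)
    assume "\<not> ?thesis"
    then have "\<And>t. t \<le> r*n \<Longrightarrow> Sw x (i+t) n = Lw x n + 1" using rng by blast
    from this[of 0] this have "\<And>t. t \<le> r*n \<Longrightarrow> Sw x (i+t) n = Sw x i n" by simp
    then show False using no_const_run[OF pf r n] by blast
  qed
  show "\<exists>t\<le>r*n. Sw x (i+t) n = Lw x n + 1"
  proof (rule ccontr)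
    assume "\<not> ?thesis"
    then have "\<And>t. t \<le> r*n \<Longrightarrow> Sw x (i+t) n = Lw x n" using rng by blast
    from this[of 0] this have "\<And>t. t \<le> r*n \<Longrightarrow> Sw x (i+t) n = Sw x i n" by simp
    then show False using no_const_run[OF pf r n] by blast
  qed
qed

lemma blocks:
  assumes "balanced x" "\<forall>i. x i \<in> {0,1}"
  shows "m * Lw x d \<le> Sw x i (m*d) \<and> Sw x i (m*d) \<le> m * Lw x d + m"
proof (induct m arbitrary: i)
  case 0 then show ?case by simp
next
  case (Suc m)
  have "Sw x i (Suc m * d) = Sw x i d + Sw x (i+d) (m*d)" using Sw_add[of x i d "m*d"] by simp
  moreover have "Lw x d \<le> Sw x i d" "Sw x i d \<le> Lw x d + 1" using Lw_le Lw_ge[OF assms] by auto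
  ultimately show ?case using Suc[of "i+d"] by simp
qed

locale setting =
  fixes x :: "nat \<Rightarrow> nat" and r p q A B d :: nat
  assumes bal: "balanced x" and bin: "\<forall>i. x i \<in> {0,1}" and pf: "power_free r x" and r: "r > 0"
    and d: "d \<ge> 1"
    and Wm: "\<And>j. j < A \<Longrightarrow> x (p+j) = x (q+j)"
    and Zm: "\<And>j. j < B \<Longrightarrow> x (p+A+j) = x (q+A+d+j)"
begin

definition "c = Sw x (q+A) d"

lemma window:
  assumes "e + d + f + s = A" "g + f \<le> B"
  shows "Sw x (p+e) (d+f) \<le> c + Sw x (p+A+g) f + 1 \<and> c + Sw x (p+A+g) f \<le> Sw x (p+e) (d+f) + 1"
proof -
  define n where "n = d+f+s+g"
  have a: "Sw x (p+e) n = Sw x (p+e) (d+f) + Sw x (p+e+d+f) s + Sw x (p+A) g"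
  proof -
    have "Sw x (p+e) n = Sw x (p+e) (d+f) + Sw x (p+e+(d+f)) (s+g)"
      unfolding n_def using Sw_add[of x "p+e" "d+f" "s+g"] by (simp add: add.assoc)
    also have "Sw x (p+e+(d+f)) (s+g) = Sw x (p+e+d+f) s + Sw x (p+e+d+f+s) g"
      using Sw_add[of x "p+e+d+f" s g] by (simp add: add.assoc)
    also have "p+e+d+f+s = p+A" using assms(1) by simp
    finally show ?thesis by simp
  qed
  have b: "Sw x (q+e+d+f) n = Sw x (q+e+d+f) s + c + Sw x (q+A+d) g + Sw x (q+A+d+g) f"
  proof -
    have "Sw x (q+e+d+f) n = Sw x (q+e+d+f) s + Sw x (q+e+d+f+s) (d + (g+f))"
      unfolding n_def using Sw_add[of x "q+e+d+f" s "d+(g+f)"] by (simp add: ac_simps)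
    also have "q+e+d+f+s = q+A" using assms(1) by simp
    also have "Sw x (q+A) (d+(g+f)) = c + Sw x (q+A+d) (g+f)"
      unfolding c_def by (rule Sw_add)
    also have "Sw x (q+A+d) (g+f) = Sw x (q+A+d) g + Sw x (q+A+d+g) f" by (rule Sw_add)
    finally show ?thesis by simp
  qed
  have e1: "Sw x (q+e+d+f) s = Sw x (p+e+d+f) s"
    by (rule Sw_cong) (metis Wm add.assoc assms(1) add_less_cancel_left)
  have e2: "Sw x (q+A+d) g = Sw x (p+A) g"
    by (rule Sw_cong) (use Zm assms(2) in auto)
  have e3: "Sw x (q+A+d+g) f = Sw x (p+A+g) f"
    by (rule Sw_cong) (use Zm[of "g+_"] assms(2) in \<open>auto simp: add.assoc\<close>)
  have "Sw x (p+e) n \<le> Sw x (q+e+d+f) n + 1" "Sw x (q+e+d+f) n \<le> Sw x (p+e) n + 1"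
    using bal_Sw[OF bal bin] by auto
  then show ?thesis using a b e1 e2 e3 by simp
qed

lemma Lstep:
  assumes f: "f \<ge> 1" and hA: "(r+1)*(d+f) \<le> A" and hB: "(r+1)*f \<le> B"
  shows "Lw x (d+f) = c + Lw x f"
proof -
  have rf: "(r+1)*f = r*f + f" "(r+1)*(d+f) = r*(d+f) + (d+f)" by simp_all
  obtain g1 where g1: "g1 \<le> r*f" "Sw x (p+A+g1) f = Lw x f"
    using both_values(1)[OF pf r f bal bin, of "p+A"] by blast
  obtain g2 where g2: "g2 \<le> r*f" "Sw x (p+A+g2) f = Lw x f + 1"
    using both_values(2)[OF pf r f bal bin, of "p+A"] by blast
  have df: "d+f \<ge> 1" using f by simp
  define i0 where "i0 = A - (r+1)*(d+f)"
  obtain t1 where t1: "t1 \<le> r*(d+f)" "Sw x (p+i0+t1) (d+f) = Lw x (d+f)"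
    using both_values(1)[OF pf r df bal bin, of "p+i0"] by blast
  obtain t2 where t2: "t2 \<le> r*(d+f)" "Sw x (p+i0+t2) (d+f) = Lw x (d+f) + 1"
    using both_values(2)[OF pf r df bal bin, of "p+i0"] by blast
  have w1: "Sw x (p+(i0+t1)) (d+f) \<le> c + Sw x (p+A+g2) f + 1 \<and> c + Sw x (p+A+g2) f \<le> Sw x (p+(i0+t1)) (d+f) + 1"
    by (rule window[where s="r*(d+f) - t1"]) (use hA hB rf g2 t1 in \<open>simp_all add: i0_def\<close>)
  have w2: "Sw x (p+(i0+t2)) (d+f) \<le> c + Sw x (p+A+g1) f + 1 \<and> c + Sw x (p+A+g1) f \<le> Sw x (p+(i0+t2)) (d+f) + 1"
    by (rule window[where s="r*(d+f) - t2"]) (use hA hB rf g1 t2 in \<open>simp_all add: i0_def\<close>)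
  show ?thesis using w1 w2 g1 g2 t1 t2 by (simp add: add.assoc)
qed

definition "F = (d+1)*(r*d+1)"

lemma Lchain:
  assumes hA: "(r+1)*(d+F) \<le> A" and hB: "(r+1)*F \<le> B"
  shows "(m+1)*d \<le> F \<Longrightarrow> Lw x ((m+2)*d) = (m+1)*c + Lw x d"
proof (induct m)
  case 0
  have "Lw x (d+d) = c + Lw x d"
  proof (rule Lstep)
    show "1 \<le> d" using d .
    have "d+d \<le> d+F" using 0 by simp
    then show "(r+1)*(d+d) \<le> A" using le_trans[OF mult_le_mono2 hA] by blast
    have "d \<le> F" using 0 by simp
    then show "(r+1)*d \<le> B" using le_trans[OF mult_le_mono2 hB] by blast
  qed
  then show ?case by (simp add: mult_2)
next
  case (Suc m)
  have le: "(m+2)*d \<le> F" using Suc.prems by simp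
  then have ih: "Lw x ((m+2)*d) = (m+1)*c + Lw x d" using Suc.hyps by simp
  have "Lw x (d+(m+2)*d) = c + Lw x ((m+2)*d)"
  proof (rule Lstep)
    show "1 \<le> (m+2)*d" using d by simp
    have "d+(m+2)*d \<le> d+F" using le by simp
    then show "(r+1)*(d+(m+2)*d) \<le> A" using le_trans[OF mult_le_mono2 hA] by blast
    show "(r+1)*((m+2)*d) \<le> B" using le_trans[OF mult_le_mono2[OF le] hB] .
  qed
  moreover have "d+(m+2)*d = (Suc m + 2)*d" by simp
  ultimately show ?case using ih by simp
qed

lemma two_same:
  assumes "v = Lw x d \<or> v = Lw x d + 1"
  shows "\<exists>i t. t \<ge> 1 \<and> t*d \<le> F \<and> Sw x i d = v \<and> Sw x (i+t*d) d = v"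
proof -
  have ex: "\<exists>t. t \<le> r*d \<and> Sw x (k*(r*d+1)+t) d = v" for k
    using both_values[OF pf r d bal bin, of "k*(r*d+1)"] assms by blast
  define y where "y k = k*(r*d+1) + (SOME t. t \<le> r*d \<and> Sw x (k*(r*d+1)+t) d = v)" for k
  have y1: "Sw x (y k) d = v" "y k \<le> k*(r*d+1) + r*d" "k*(r*d+1) \<le> y k" for k
    using someI_ex[OF ex[of k]] unfolding y_def by auto
  have ymono: "y k < y k'" if "k < k'" for k k'
  proof -
    have "y k \<le> k*(r*d+1) + r*d" by (rule y1)
    also have "\<dots> < (k+1)*(r*d+1)" by simp
    also have "\<dots> \<le> k'*(r*d+1)" using that by (intro mult_le_mono1) simp
    also have "\<dots> \<le> y k'" by (rule y1)
    finally show ?thesis .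
  qed
  have "card ((\<lambda>k. y k mod d) ` {0..d}) \<le> card {..<d}"
    by (rule card_mono) (use d in auto)
  then have "card ((\<lambda>k. y k mod d) ` {0..d}) < card {0..d}" by simp
  then have "\<not> inj_on (\<lambda>k. y k mod d) {0..d}" by (rule pigeonhole)
  then obtain k1 k2 where k: "k1 \<in> {0..d}" "k2 \<in> {0..d}" "k1 < k2" "y k1 mod d = y k2 mod d"
    unfolding inj_on_def by (metis linorder_neqE_nat)
  have lt: "y k1 < y k2" using ymono k(3) .
  obtain t where t: "y k2 = y k1 + d*t" using mod_eq_nat1E[of "y k2" d "y k1"] k(4) lt by auto
  have "t \<ge> 1" using t lt by (cases t) auto
  moreover have "t*d \<le> F"
  proof -
    have "t*d \<le> y k2" using t by simp
    also have "\<dots> \<le> k2*(r*d+1) + r*d" by (rule y1)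
    also have "\<dots> \<le> d*(r*d+1) + r*d" using k(2) mult_le_mono1[of k2 d "r*d+1"] by simp
    also have "\<dots> \<le> F" unfolding F_def by simp
    finally show ?thesis .
  qed
  ultimately show ?thesis using y1(1)[of k1] y1(1)[of k2] t by (metis mult.commute)
qed

lemma contradiction:
  assumes hA: "(r+1)*(d+F) \<le> A" and hB: "(r+1)*F \<le> B"
  shows False
proof -
  have cr: "Lw x d \<le> c" "c \<le> Lw x d + 1" unfolding c_def using Lw_le Lw_ge[OF bal bin] by auto
  define v where "v = (if c = Lw x d then Lw x d + 1 else Lw x d)"
  have "v = Lw x d \<or> v = Lw x d + 1" unfolding v_def by auto
  then obtain i t where it: "t \<ge> 1" "t*d \<le> F" "Sw x i d = v" "Sw x (i+t*d) d = v"
    using two_same by blast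
  then obtain m where m: "t = m+1" by (metis add.commute le_Suc_ex)
  have L: "Lw x ((m+2)*d) = (m+1)*c + Lw x d" using Lchain[OF hA hB] it(2) m by simp
  have split: "Sw x i ((m+2)*d) = Sw x i d + Sw x (i+d) (m*d) + Sw x (i+t*d) d"
  proof -
    have "Sw x i ((m+2)*d) = Sw x i (d + (m*d + d))" by (rule arg_cong[where f="Sw x i"]) simp
    then have "Sw x i ((m+2)*d) = Sw x i d + (Sw x (i+d) (m*d) + Sw x (i+d+m*d) d)"
      using Sw_add[of x i d "m*d+d"] Sw_add[of x "i+d" "m*d" d] by simp
    moreover have "i+d+m*d = i+t*d" using m by simp
    ultimately show ?thesis by simp
  qed
  have bl: "m * Lw x d \<le> Sw x (i+d) (m*d)" "Sw x (i+d) (m*d) \<le> m * Lw x d + m"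
    using blocks[OF bal bin] by auto
  have tot: "Lw x ((m+2)*d) \<le> Sw x i ((m+2)*d)" "Sw x i ((m+2)*d) \<le> Lw x ((m+2)*d) + 1"
    using Lw_le Lw_ge[OF bal bin] by auto
  have e1: "(m+1)*c = m*c + c" by simp
  show False
  proof (cases "c = Lw x d")
    case True
    then have "v = Lw x d + 1" unfolding v_def by simp
    then show False using split bl tot L e1 it True by simp
  next
    case False
    then have "c = Lw x d + 1" "v = Lw x d" using cr unfolding v_def by auto
    moreover have "m*(Lw x d + 1) = m * Lw x d + m" by (simp add: distrib_left)
    ultimately show False using split bl tot L e1 it by simp
  qed
qed

end

theorem lemma2p4:
  fixes r :: nat and x :: "nat \<Rightarrow> nat" and V :: "nat \<Rightarrow> nat list"
  assumes "r > 0"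
    and "sturmian x"
    and "power_free r x"
    and "\<forall>i. V i \<noteq> [] \<and> set (V i) \<subseteq> {0, 1}"
  shows "\<exists>k \<ge> 1. \<exists>n :: nat \<Rightarrow> nat. strict_mono_on {1..k} n \<and>
           (\<exists>\<sigma> :: nat \<Rightarrow> nat. bij_betw \<sigma> {1..k} {1..k} \<and>
              concat (map (\<lambda>j. V (n (\<sigma> j))) [1..<k + 1]) \<notin> Fact x)"
proof (rule ccontr)
  assume "\<not> ?thesis"
  then have H: "\<And>k n \<sigma>. k \<ge> 1 \<Longrightarrow> strict_mono_on {1..k} n \<Longrightarrow> bij_betw \<sigma> {1..k} {1..k} \<Longrightarrow>
      concat (map (\<lambda>j. V (n (\<sigma> j))) [1..<k + 1]) \<in> Fact x" by blast
  have r: "r > 0" and pf: "power_free r x" using assms by auto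
  have bin: "\<forall>i. x i \<in> {0,1}" and bal: "balanced x"
    using assms(2) unfolding sturmian_def binary_word_def by auto
  have allF: "V i \<in> Fact x" for i
    using H[of 1 "\<lambda>_. i" id] by (simp add: strict_mono_on_def)
  define d where "d = length (V 0)"
  have d: "d \<ge> 1" using assms(4) unfolding d_def by (metis One_nat_def Suc_leI length_greater_0_conv)
  define F where "F = (d+1)*(r*d+1)"
  define N where "N = (r+1)*(d+F)"
  show False
  proof (cases "\<exists>i l. 0 < i \<and> i < l \<and> N \<le> length (V i) \<and> N \<le> length (V l)")
    case True
    then obtain i l where il: "0 < i" "i < l" "N \<le> length (V i)" "N \<le> length (V l)" by blast
    have wz: "V i @ V l \<in> Fact x"
    proof -
      have "concat (map (\<lambda>j. V ((\<lambda>j. if j = 1 then i else l) (id j))) [1..<2 + 1]) \<in> Fact x"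
        by (rule H[of 2 "\<lambda>j. if j = 1 then i else l" id]) (use il in \<open>auto simp: strict_mono_on_def\<close>)
      moreover have "[1..<2+1] = [1,2::nat]" by (simp add: upt_rec)
      ultimately show ?thesis by simp
    qed
    have wuz: "V i @ V 0 @ V l \<in> Fact x"
    proof -
      let ?n = "\<lambda>j::nat. if j = 1 then 0 else if j = 2 then i else l"
      let ?s = "\<lambda>j::nat. if j = 1 then 2 else if j = 2 then 1 else j"
      have b: "bij_betw ?s {1..3} {1..3}"
      proof -
        have "{1..3::nat} = {1,2,3}" by auto
        then show ?thesis unfolding bij_betw_def inj_on_def by auto
      qed
      have "concat (map (\<lambda>j. V (?n (?s j))) [1..<3 + 1]) \<in> Fact x"
        by (rule H[of 3 ?n ?s, OF _ _ b]) (use il in \<open>auto simp: strict_mono_on_def\<close>)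
      moreover have "[1..<3+1] = [1,2,3::nat]" by (simp add: upt_rec)
      ultimately show ?thesis by simp
    qed
    obtain p where p: "V i @ V l = map x [p..<p+length (V i @ V l)]" using Fact_E[OF wz] by blast
    obtain q where q: "V i @ V 0 @ V l = map x [q..<q+length (V i @ V 0 @ V l)]" using Fact_E[OF wuz] by blast
    define A where "A = length (V i)"
    define B where "B = length (V l)"
    interpret S: setting x r p q A B d
    proof
      show "balanced x" "\<forall>i. x i \<in> {0,1}" "power_free r x" "0 < r" "1 \<le> d" by (fact bal bin pf r d)+
      show "x (p+j) = x (q+j)" if "j < A" for j
        using Fact_nth[OF p[symmetric], of j] Fact_nth[OF q[symmetric], of j] that
        by (simp add: A_def nth_append)
      show "x (p+A+j) = x (q+A+d+j)" if "j < B" for j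
        using Fact_nth[OF p[symmetric], of "A+j"] Fact_nth[OF q[symmetric], of "A+d+j"] that
        by (simp add: A_def B_def d_def nth_append add.assoc)
    qed
    show False
    proof (rule S.contradiction)
      show "(r+1)*(d+S.F) \<le> A" using il(3) mult_le_mono2[of F "d+F" r] unfolding A_def N_def F_def S.F_def by simp
      have "(r+1)*F \<le> (r+1)*(d+F)" by (rule mult_le_mono2) simp
      then show "(r+1)*S.F \<le> B" using il(4) unfolding B_def N_def F_def S.F_def by linarith
    qed
  next
    case False
    define I where "I = {i. 0 < i \<and> N \<le> length (V i)}"
    define J where "J = {i. 0 < i \<and> length (V i) < N}"
    have "finite I"
    proof (cases "I = {}")
      case False
      then obtain a where a: "a \<in> I" by blast
      have "I \<subseteq> {..a}"
      proof
        fix l assume "l \<in> I"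
        then show "l \<in> {..a}" using a \<open>\<not> (\<exists>i l. _)\<close> unfolding I_def by (metis (mono_tags, lifting) atMost_iff linorder_not_le mem_Collect_eq)
      qed
      then show ?thesis using finite_subset by blast
    qed simp
    moreover have "{i. 0 < i} \<subseteq> I \<union> J" unfolding I_def J_def by auto
    moreover have "infinite {i::nat. 0 < i}"
      by (metis (mono_tags) infinite_Ioi greaterThan_def)
    ultimately have infJ: "infinite J" by (meson finite_UnI finite_subset)
    have "V ` J \<subseteq> {xs. set xs \<subseteq> {0,1} \<and> length xs \<le> N}"
      using assms(4) unfolding J_def by auto
    then have "finite (V ` J)" using finite_lists_length_le[of "{0::nat,1}" N] finite_subset by blast
    then obtain y where y: "y \<in> V ` J" "infinite (V -` {y})" using infJ by (rule inf_img_fin_domE)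
    define T where "T = V -` {y}"
    have yF: "y \<in> Fact x" using y(1) allF by auto
    have "concat (map (\<lambda>j. V (enumerate T (id j))) [1..<r + 1]) \<in> Fact x"
    proof (rule H[of r "enumerate T" id])
      show "1 \<le> r" using r by simp
      show "strict_mono_on {1..r} (enumerate T)"
        using strict_mono_enumerate[of T] y(2) unfolding T_def
        by (simp add: strict_mono_def strict_mono_on_def)
      show "bij_betw id {1..r} {1..r}" by simp
    qed
    moreover have "map (\<lambda>j. V (enumerate T (id j))) [1..<r + 1] = replicate r y"
    proof -
      have "map (\<lambda>j. V (enumerate T (id j))) [1..<r + 1] = map (\<lambda>_. y) [1..<r + 1]"
        using enumerate_in_set[of T] y(2) unfolding T_def by simp
      also have "\<dots> = replicate r y" by (simp only: map_replicate_const) simp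
      finally show ?thesis .
    qed
    ultimately have "concat (replicate r y) \<in> Fact x" by simp
    then show False using pf yF unfolding power_free_def by blast
  qed
qed

end
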